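(* There is no unitary $U$ on two qubits $A\otimes B$ such that for every pure qubit state $|\psi\rangle$, both one-qubit reduced states $\rho_A=\mathrm{Tr}_B\big(U(|\psi\rangle\langle\psi|\otimes|0\rangle\langle0|)U^\dagger\big)$ and $\rho_B=\mathrm{Tr}_A\big(U(|\psi\rangle\langle\psi|\otimes|0\rangle\langle0|)U^\dagger\big)$ satisfy $C_l(\rho_A)=C_l(\rho_B)=C_l(|\psi\rangle)$. (That is, without a machine/ancilla system, no unitary acting on input and blank state clones the coherence of all pure states; in particular no such unitary starting from two orthogonal states $|\psi_1\rangle,|\psi_2\rangle$ via $U|\psi_i\rangle|0\rangle=|\Psi_i\rangle$ extends to clone the coherence of every $\alpha|\psi_1\rangle+\beta|\psi_2\rangle$.)
   Context: For a qubit density matrix $\rho$, the $l_1$-norm of coherence in the computational basis is $C_l(\rho)=\sum_{i\neq j}|\langle i|\rho|j\rangle|$; for a pure state $C_l(|\phi\rangle)=C_l(|\phi\rangle\langle\phi|)$. *)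

theory Defs
  imports "HOL-Analysis.Analysis"
begin

text \<open>Two qubits A (x) B: index type 2 \<times> 2,
 where the pair (i,j) stands for the basis vector |i>_A |j>_B.\<close>

type_synonym qubit = "complex ^ 2"
type_synonym qmat = "complex ^ 2 ^ 2"
type_synonym qubits2 = "complex ^ (2 \<times> 2)"
type_synonym qmat2 = "complex ^ (2 \<times> 2) ^ (2 \<times> 2)"

definition adjoint_mat :: "complex ^ 'n ^ 'n \<Rightarrow> complex ^ 'n ^ 'n" where
  "adjoint_mat U = (\<chi> i j. cnj (U $ j $ i))"

definition unitary_mat :: "complex ^ 'n ^ 'n \<Rightarrow> bool" where
  "unitary_mat U \<longleftrightarrow> adjoint_mat U ** U = mat 1 \<and> U ** adjoint_mat U = mat 1"

definition pure_state :: "complex ^ 'n \<Rightarrow> bool" where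
  "pure_state \<psi> \<longleftrightarrow> norm \<psi> = 1"

definition proj :: "complex ^ 'n \<Rightarrow> complex ^ 'n ^ 'n" where
  "proj \<phi> = (\<chi> i j. \<phi> $ i * cnj (\<phi> $ j))"

definition tensor_vec :: "qubit \<Rightarrow> qubit \<Rightarrow> qubits2" where
  "tensor_vec \<psi> \<phi> = (\<chi> p. \<psi> $ fst p * \<phi> $ snd p)"

definition ket0 :: qubit where
  "ket0 = (\<chi> i. if i = 0 then 1 else 0)"

definition ptrace_B :: "qmat2 \<Rightarrow> qmat" where
  "ptrace_B \<rho> = (\<chi> i k. \<Sum>j\<in>UNIV. \<rho> $ (i, j) $ (k, j))"

definition ptrace_A :: "qmat2 \<Rightarrow> qmat" where
  "ptrace_A \<rho> = (\<chi> j l. \<Sum>i\<in>UNIV. \<rho> $ (i, j) $ (i, l))"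

definition l1_coherence :: "complex ^ 'n ^ 'n \<Rightarrow> real" where
  "l1_coherence \<rho> = (\<Sum>(i, j) \<in> {(i, j). i \<noteq> j}. norm (\<rho> $ i $ j))"

definition l1_coherence_pure :: "complex ^ 'n \<Rightarrow> real" where
  "l1_coherence_pure \<phi> = l1_coherence (proj \<phi>)"

end

theory Submission
  imports Defs
begin

lemma two_eq0: "(2::2) = 0" by simp
lemma UNIV2: "(UNIV::2 set) = {0,1}" using UNIV_2 two_eq0 by (metis insert_commute)
lemma ex2: "(x::2) = 0 \<or> x = 1" using UNIV2 by auto
lemma sum2: "sum f (UNIV::2 set) = f 0 + f 1" by (simp add: UNIV2)
lemma UNIV22: "(UNIV::(2\<times>2) set) = {(0,0),(0,1),(1,0),(1,1)}"
  using UNIV2 by auto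
lemma sum22: "sum f (UNIV::(2\<times>2) set) = f (0,0) + f (0,1) + f (1,0) + f (1,1)"
  by (simp add: UNIV22 add.assoc)
lemma offdiag: "{(i,j). i \<noteq> j} = {(0::2,1::2),(1,0)}"
proof -
  have "\<And>i j::2. i \<noteq> j \<longleftrightarrow> (i,j) = (0,1) \<or> (i,j)=(1,0)" using ex2
    by (metis zero_neq_one prod.inject)
  then show ?thesis by auto
qed

lemma l1_2: "l1_coherence (M :: complex^2^2) = norm (M$0$1) + norm (M$1$0)"
  unfolding l1_coherence_def offdiag by simp

lemma proj_conj: "U ** proj w ** adjoint_mat U = proj (U *v w)"
  by (simp add: vec_eq_iff matrix_matrix_mult_def proj_def adjoint_mat_def
      matrix_vector_mult_def sum_distrib_left sum_distrib_right cnj_sum mult_ac)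

definition g :: "complex \<Rightarrow> complex \<Rightarrow> complex \<Rightarrow> complex \<Rightarrow> complex" where
  "g x0 x1 y0 y1 = x0 * cnj y0 + x1 * cnj y1"

lemma g_expand: "g (a*u0+b* v0) (a*u1+b* v1) (a*u2+b* v2) (a*u3+b* v3) =
   a*cnj a * g u0 u1 u2 u3 + b*cnj b * g v0 v1 v2 v3 + a*cnj b * g u0 u1 v2 v3 + b*cnj a * g v0 v1 u2 u3"
  by (simp add: g_def algebra_simps)

lemma parallelogram: "cmod (x+y)^2 + cmod (x-y)^2 = 2*(cmod x^2 + cmod y^2)"
  by (simp only: cmod_power2) (simp add: power2_eq_square algebra_simps)

lemma side:
  assumes h1: "cmod (g (1*u0+0* v0) (1*u1+0* v1) (1*u2+0* v2) (1*u3+0* v3)) = cmod 1 * cmod 0"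
    and h2: "cmod (g (0*u0+1* v0) (0*u1+1* v1) (0*u2+1* v2) (0*u3+1* v3)) = cmod 0 * cmod 1"
    and h3: "cmod (g ((3/5)*u0+(4/5)* v0) ((3/5)*u1+(4/5)* v1) ((3/5)*u2+(4/5)* v2) ((3/5)*u3+(4/5)* v3))
             = cmod (3/5) * cmod (4/5)"
    and h4: "cmod (g ((3/5)*u0+(4/5*\<i>)* v0) ((3/5)*u1+(4/5*\<i>)* v1) ((3/5)*u2+(4/5*\<i>)* v2) ((3/5)*u3+(4/5*\<i>)* v3))
             = cmod (3/5) * cmod (4/5*\<i>)"
  shows "cmod (g u0 u1 v2 v3)^2 + cmod (g v0 v1 u2 u3)^2 = 1"
proof -
  have gu: "g u0 u1 u2 u3 = 0" using h1 by simp
  have gv: "g v0 v1 v2 v3 = 0" using h2 by simp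
  define Z where "Z = g u0 u1 v2 v3 + g v0 v1 u2 u3"
  define W where "W = g v0 v1 u2 u3 - g u0 u1 v2 v3"
  have e3: "g ((3/5)*u0+(4/5)* v0) ((3/5)*u1+(4/5)* v1) ((3/5)*u2+(4/5)* v2) ((3/5)*u3+(4/5)* v3)
     = (12/25) * Z"
    unfolding g_expand gu gv Z_def by (simp add: algebra_simps)
  have e4: "g ((3/5)*u0+(4/5*\<i>)* v0) ((3/5)*u1+(4/5*\<i>)* v1) ((3/5)*u2+(4/5*\<i>)* v2) ((3/5)*u3+(4/5*\<i>)* v3)
     = (12/25*\<i>) * W"
    unfolding g_expand gu gv W_def by (simp add: algebra_simps)
  have "cmod Z = 1"
    using h3 unfolding e3 by (simp add: norm_mult)
  then have n3: "cmod (g u0 u1 v2 v3 + g v0 v1 u2 u3) = 1" unfolding Z_def .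
  have "cmod W = 1"
    using h4 unfolding e4 by (simp add: norm_mult)
  then have n4: "cmod (g u0 u1 v2 v3 - g v0 v1 u2 u3) = 1" unfolding W_def by (simp add: norm_minus_commute)
  show ?thesis using parallelogram[of "g u0 u1 v2 v3" "g v0 v1 u2 u3"] n3 n4 by simp
qed

lemma CS: "cmod (g x0 x1 y0 y1)^2 \<le> (cmod x0^2 + cmod x1^2)*(cmod y0^2 + cmod y1^2)"
proof -
  have "cmod (g x0 x1 y0 y1) \<le> cmod x0 * cmod y0 + cmod x1 * cmod y1"
    unfolding g_def by (metis complex_mod_cnj norm_mult norm_triangle_ineq)
  then have "cmod (g x0 x1 y0 y1)^2 \<le> (cmod x0 * cmod y0 + cmod x1 * cmod y1)^2"
    by (simp add: power_mono)
  also have "\<dots> \<le> (cmod x0^2 + cmod x1^2)*(cmod y0^2 + cmod y1^2)"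
  proof -
    have "0 \<le> (cmod x0 * cmod y1 - cmod x1 * cmod y0)^2" by simp
    then show ?thesis by (simp add: power2_eq_square algebra_simps)
  qed
  finally show ?thesis .
qed

lemma realcase:
  fixes A B C D X Y :: real
  assumes "0 \<le> A" "0 \<le> B" "0 \<le> C" "0 \<le> D" "A + B = 1" "C + D = 1"
    "X \<le> A*D" "Y \<le> B*C" "X + Y = 1" "0 \<le> X" "0 \<le> Y"
  shows "(B = 0 \<and> C = 0 \<and> X = 1) \<or> (A = 0 \<and> D = 0 \<and> Y = 1)"
proof -
  have B: "B = 1 - A" and C: "C = 1 - D" using assms by auto
  have "A*(1-D) + D*(1-A) \<le> 0" using assms(7-9) unfolding B C by (simp add: algebra_simps)
  moreover have "0 \<le> A*(1-D)" "0 \<le> D*(1-A)" using assms B C by auto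
  ultimately have "A*(1-D) = 0" "D*(1-A) = 0" by linarith+
  then have "(A = 0 \<and> D = 0) \<or> (A = 1 \<and> D = 1)" by auto
  then show ?thesis using assms B C by auto
qed

lemma phi_entry: "(U *v tensor_vec \<psi> ket0) $ k = \<psi>$0 * U$k$(0,0) + \<psi>$1 * U$k$(1,0)"
  by (simp add: matrix_vector_mult_def sum22 tensor_vec_def ket0_def mult_ac)

lemma cohB: "l1_coherence (ptrace_B (proj \<Phi>)) = 2 * cmod (g (\<Phi>$(0,0)) (\<Phi>$(0,1)) (\<Phi>$(1,0)) (\<Phi>$(1,1)))"
proof -
  have "ptrace_B (proj \<Phi>) $ 1 $ 0 = cnj (ptrace_B (proj \<Phi>) $ 0 $ 1)"
    by (simp add: ptrace_B_def proj_def sum2)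
  then have "cmod (ptrace_B (proj \<Phi>) $ 1 $ 0) = cmod (ptrace_B (proj \<Phi>) $ 0 $ 1)" by simp
  then show ?thesis unfolding l1_2 by (simp add: ptrace_B_def proj_def sum2 g_def)
qed

lemma cohA: "l1_coherence (ptrace_A (proj \<Phi>)) = 2 * cmod (g (\<Phi>$(0,0)) (\<Phi>$(1,0)) (\<Phi>$(0,1)) (\<Phi>$(1,1)))"
proof -
  have "ptrace_A (proj \<Phi>) $ 1 $ 0 = cnj (ptrace_A (proj \<Phi>) $ 0 $ 1)"
    by (simp add: ptrace_A_def proj_def sum2)
  then have "cmod (ptrace_A (proj \<Phi>) $ 1 $ 0) = cmod (ptrace_A (proj \<Phi>) $ 0 $ 1)" by simp
  then show ?thesis unfolding l1_2 by (simp add: ptrace_A_def proj_def sum2 g_def)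
qed

lemma cohP: "l1_coherence_pure (\<psi>::qubit) = 2 * cmod (\<psi>$0) * cmod (\<psi>$1)"
  unfolding l1_coherence_pure_def l1_2 by (simp add: proj_def norm_mult)

definition mk2 :: "complex \<Rightarrow> complex \<Rightarrow> qubit" where
  "mk2 a b = (\<chi> i. if i = 0 then a else b)"

lemma mk2_0[simp]: "mk2 a b $ 0 = a" and mk2_1[simp]: "mk2 a b $ 1 = b"
  by (simp_all add: mk2_def)

lemma pure_mk2: "cmod a^2 + cmod b^2 = 1 \<Longrightarrow> pure_state (mk2 a b)"
  unfolding pure_state_def norm_vec_def L2_set_def by (simp add: sum2)

lemma unit_col:
  assumes "unitary_mat (U::qmat2)"
  shows "cmod (U$(0,0)$c)^2 + cmod (U$(0,1)$c)^2 + cmod (U$(1,0)$c)^2 + cmod (U$(1,1)$c)^2 = 1"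
proof -
  have "(adjoint_mat U ** U) $ c $ c = 1" using assms unfolding unitary_mat_def by (simp add: mat_def)
  then have "cnj (U$(0,0)$c) * U$(0,0)$c + cnj (U$(0,1)$c) * U$(0,1)$c + cnj (U$(1,0)$c) * U$(1,0)$c
     + cnj (U$(1,1)$c) * U$(1,1)$c = 1"
    by (simp add: matrix_matrix_mult_def adjoint_mat_def sum22)
  then have "complex_of_real (cmod (U$(0,0)$c)^2 + cmod (U$(0,1)$c)^2 + cmod (U$(1,0)$c)^2 + cmod (U$(1,1)$c)^2) = 1"
    by (simp only: of_real_add complex_norm_square) (simp add: mult.commute)
  then show ?thesis by (metis of_real_eq_1_iff)
qed

lemma sq0: "cmod x^2 + cmod y^2 = 0 \<Longrightarrow> x = 0 \<and> y = 0"
  by (smt (verit) norm_eq_zero zero_le_power2 power_eq_0_iff)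

theorem theorem2:
  shows "\<not> (\<exists>U :: qmat2. unitary_mat U \<and>
            (\<forall>\<psi> :: qubit. pure_state \<psi> \<longrightarrow>
               (let \<rho> = U ** proj (tensor_vec \<psi> ket0) ** adjoint_mat U
                in l1_coherence (ptrace_B \<rho>) = l1_coherence_pure \<psi> \<and>
                   l1_coherence (ptrace_A \<rho>) = l1_coherence_pure \<psi>)))"
proof
  assume "\<exists>U :: qmat2. unitary_mat U \<and>
            (\<forall>\<psi> :: qubit. pure_state \<psi> \<longrightarrow>
               (let \<rho> = U ** proj (tensor_vec \<psi> ket0) ** adjoint_mat U
                in l1_coherence (ptrace_B \<rho>) = l1_coherence_pure \<psi> \<and>
                   l1_coherence (ptrace_A \<rho>) = l1_coherence_pure \<psi>))"
  then obtain U :: qmat2 where uU: "unitary_mat U" and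
    H: "\<And>\<psi>::qubit. pure_state \<psi> \<Longrightarrow>
           l1_coherence (ptrace_B (proj (U *v tensor_vec \<psi> ket0))) = l1_coherence_pure \<psi> \<and>
           l1_coherence (ptrace_A (proj (U *v tensor_vec \<psi> ket0))) = l1_coherence_pure \<psi>"
    by (auto simp: proj_conj Let_def)
  define u0 where "u0 = U$(0,0)$(0,0)"
  define u1 where "u1 = U$(0,1)$(0,0)"
  define u2 where "u2 = U$(1,0)$(0,0)"
  define u3 where "u3 = U$(1,1)$(0,0)"
  define w0 where "w0 = U$(0,0)$(1,0)"
  define w1 where "w1 = U$(0,1)$(1,0)"
  define w2 where "w2 = U$(1,0)$(1,0)"
  define w3 where "w3 = U$(1,1)$(1,0)"
  have C: "cmod (g (a*u0+b*w0) (a*u1+b*w1) (a*u2+b*w2) (a*u3+b*w3)) = cmod a * cmod b \<and>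
           cmod (g (a*u0+b*w0) (a*u2+b*w2) (a*u1+b*w1) (a*u3+b*w3)) = cmod a * cmod b"
    if ab: "cmod a^2 + cmod b^2 = 1" for a b
  proof -
    have "l1_coherence (ptrace_B (proj (U *v tensor_vec (mk2 a b) ket0))) = l1_coherence_pure (mk2 a b) \<and>
           l1_coherence (ptrace_A (proj (U *v tensor_vec (mk2 a b) ket0))) = l1_coherence_pure (mk2 a b)"
      using H pure_mk2[OF ab] by blast
    then show ?thesis unfolding cohA cohB cohP phi_entry u0_def u1_def u2_def u3_def
        w0_def w1_def w2_def w3_def by simp
  qed
  have c1: "cmod (1::complex)^2 + cmod (0::complex)^2 = 1" by simp
  have c2: "cmod (0::complex)^2 + cmod (1::complex)^2 = 1" by simp
  have c3: "cmod (3/5::complex)^2 + cmod (4/5::complex)^2 = 1" by (simp add: power2_eq_square)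
  have c4: "cmod (3/5::complex)^2 + cmod (4/5*\<i>::complex)^2 = 1" by (simp add: power2_eq_square norm_mult)
  have SA: "cmod (g u0 u1 w2 w3)^2 + cmod (g w0 w1 u2 u3)^2 = 1"
    by (rule side; rule conjunct1[OF C]; rule c1 c2 c3 c4)
  have SB: "cmod (g u0 u2 w1 w3)^2 + cmod (g w0 w2 u1 u3)^2 = 1"
    by (rule side; rule conjunct2[OF C]; rule c1 c2 c3 c4)
  have nu: "cmod u0^2 + cmod u1^2 + cmod u2^2 + cmod u3^2 = 1"
    using unit_col[OF uU, of "(0,0)"] unfolding u0_def u1_def u2_def u3_def .
  have nv: "cmod w0^2 + cmod w1^2 + cmod w2^2 + cmod w3^2 = 1"
    using unit_col[OF uU, of "(1,0)"] unfolding w0_def w1_def w2_def w3_def .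
  have RA: "(cmod u2^2 + cmod u3^2 = 0 \<and> cmod w0^2 + cmod w1^2 = 0 \<and> cmod (g u0 u1 w2 w3)^2 = 1) \<or>
       (cmod u0^2 + cmod u1^2 = 0 \<and> cmod w2^2 + cmod w3^2 = 0 \<and> cmod (g w0 w1 u2 u3)^2 = 1)"
    apply (rule realcase)
    using nu nv SA CS[of u0 u1 w2 w3] CS[of w0 w1 u2 u3] by (auto simp: algebra_simps)
  have RB: "(cmod u1^2 + cmod u3^2 = 0 \<and> cmod w0^2 + cmod w2^2 = 0 \<and> cmod (g u0 u2 w1 w3)^2 = 1) \<or>
       (cmod u0^2 + cmod u2^2 = 0 \<and> cmod w1^2 + cmod w3^2 = 0 \<and> cmod (g w0 w2 u1 u3)^2 = 1)"
    apply (rule realcase)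
    using nu nv SB CS[of u0 u2 w1 w3] CS[of w0 w2 u1 u3] by (auto simp: algebra_simps)
  show False
    using RA RB by (auto dest!: sq0 simp: g_def)
qed

end
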